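(* For every positive integer $s$ and all integers $i\ge 0$ and $j$, the number $h_{s,i,j}$ defined in the context is an integer.
   Context: For a fixed positive integer $s$, the numbers $h_{s,i,j}$ (integers $i\ge 0$, $j$) are defined recursively by: $h_{s,i,j}=0$ if $j\le i$; for $i=0$ and $j\ge 1$, $h_{s,0,j}=\binom{s+j-1}{j}\frac{s-j}{s}$; for $i>0$ and $j>i$, $h_{s,i,j}=-\frac{s-j+1}{i}h_{s,i-1,j-1}-\frac{j-i}{i}h_{s,i-1,j}$. *)

theory Defs
  imports Complex_Main
begin

fun h :: "nat \<Rightarrow> nat \<Rightarrow> int \<Rightarrow> rat" where
  "h s 0 j =
     (if j \<le> 0 then 0
      else of_nat ((s + nat j - 1) choose (nat j)) * of_int (int s - j) / of_nat s)"
| "h s (Suc i) j =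
     (if j \<le> int (Suc i) then 0
      else - (of_int (int s - j + 1) / of_nat (Suc i)) * h s i (j - 1)
           - (of_int (j - int (Suc i)) / of_nat (Suc i)) * h s i j)"

end

theory Submission imports Defs "HOL-Computational_Algebra.Formal_Power_Series"
begin

abbreviation XX :: "rat fps" where "XX \<equiv> fps_X"

definition W :: "nat \<Rightarrow> rat fps" where "W s = Abs_fps (\<lambda>n. of_nat ((s+n) choose n))"
definition P :: "nat \<Rightarrow> nat \<Rightarrow> rat fps" where "P s m = XX ^ m * (1 - XX) ^ (2*s+1-m)"
definition Phi :: "nat \<Rightarrow> (nat \<Rightarrow> rat) \<Rightarrow> rat fps" where
  "Phi s a = (\<Sum>m\<le>2*s+1. fps_const (a m) * P s m) * W s"
definition Lop :: "nat \<Rightarrow> rat fps \<Rightarrow> rat fps" where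
  "Lop s f = fps_const (of_nat s) * XX * f + XX * (1 - XX) * fps_deriv f"
definition H :: "nat \<Rightarrow> nat \<Rightarrow> rat fps" where "H s i = Abs_fps (\<lambda>n. h s i (int n))"

lemma one_minus_X_nth: "fps_nth ((1 - XX) * g) n = fps_nth g n - (if n = 0 then 0 else fps_nth g (n - 1))"
  by (simp add: algebra_simps)

lemma Lop_nth: "fps_nth (Lop s f) n = (if n = 0 then 0 else
   (of_nat s - of_nat n + 1) * fps_nth f (n - 1) + of_nat n * fps_nth f n)"
proof -
  have e: "XX * (1 - XX) * fps_deriv f = XX * fps_deriv f - XX * (XX * fps_deriv f)"
    by (simp add: algebra_simps)
  show ?thesis
  proof (cases n)
    case 0 then show ?thesis by (simp add: Lop_def e mult.assoc)
  next
    case (Suc k)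
    then show ?thesis
      by (cases k) (auto simp add: Lop_def e mult.assoc algebra_simps)
  qed
qed

lemma h_zero: "j \<le> int i \<Longrightarrow> h s i j = 0"
  by (cases i) auto

lemma h_rec: "h s (Suc i) j = - (of_int (int s - j + 1) / of_nat (Suc i)) * h s i (j - 1)
           - (of_int (j - int (Suc i)) / of_nat (Suc i)) * h s i j"
proof (cases "j \<le> int (Suc i)")
  case True
  have a: "h s i (j - 1) = 0" using True by (intro h_zero) auto
  show ?thesis
  proof (cases "j = int (Suc i)")
    case True then show ?thesis using a by simp
  next
    case False
    then have "h s i j = 0" using \<open>j \<le> _\<close> by (intro h_zero) auto
    then show ?thesis using a True by simp
  qed
qed simp

lemma H_rec: "of_nat (Suc i) * H s (Suc i) = of_nat (Suc i) * H s i - Lop s (H s i)"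
proof (rule fps_ext)
  fix n
  show "fps_nth (of_nat (Suc i) * H s (Suc i)) n = fps_nth (of_nat (Suc i) * H s i - Lop s (H s i)) n"
  proof (cases n)
    case 0 then show ?thesis by (simp add: Lop_nth H_def h_zero)
  next
    case (Suc k)
    have e1: "int n - 1 = int k" using Suc by simp
    have e2: "of_nat (Suc i) = fps_const (of_nat (Suc i) :: rat)" by (simp only: fps_of_nat)
    have gen: "\<And>A x y a b d::rat. d \<noteq> 0 \<Longrightarrow> A = - (a / d) * x - (b / d) * y \<Longrightarrow> d * A = - a * x - b * y"
      by (simp add: field_simps)
    have "of_nat (Suc i) * h s (Suc i) (int n) = - of_int (int s - int n + 1) * h s i (int k)
           - of_int (int n - int (Suc i)) * h s i (int n)"
      using gen[OF _ h_rec[of s i "int n"]] e1 by (simp del: h.simps)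
    then have "of_nat (Suc i) * h s (Suc i) (int n) = of_nat (Suc i) * h s i (int n) -
        ((of_nat s - of_nat n + 1) * h s i (int k) + of_nat n * h s i (int n))"
      by (simp add: algebra_simps del: h.simps)
    then show ?thesis using Suc unfolding e2
      by (simp add: Lop_nth H_def del: h.simps)
  qed
qed

lemma W_deriv: "(1 - XX) * fps_deriv (W s) = of_nat (s+1) * W s"
proof (rule fps_ext)
  fix n
  have e2: "of_nat (s+1) = fps_const (of_nat (s+1) :: rat)" by (simp only: fps_of_nat)
  have c: "(n+1) * ((s + (n+1)) choose (n+1)) = (s+n+1) * ((s+n) choose n)"
    using Suc_times_binomial_eq[of "s+n" n] by (simp add: algebra_simps)
  show "fps_nth ((1 - XX) * fps_deriv (W s)) n = fps_nth (of_nat (s+1) * W s) n"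
  proof (cases n)
    case 0 then show ?thesis unfolding e2 by (simp add: one_minus_X_nth W_def)
  next
    case (Suc k)
    have c2: "(k+1) * ((s + (k+1)) choose (k+1)) = (s+k+1) * ((s+k) choose k)"
      using Suc_times_binomial_eq[of "s+k" k] by (simp add: algebra_simps)
    have "rat_of_nat (n+1) * of_nat ((s + (n+1)) choose (n+1)) = of_nat (s+n+1) * of_nat ((s+n) choose n)"
      using c by (metis of_nat_mult)
    moreover have "rat_of_nat (k+1) * of_nat ((s + (k+1)) choose (k+1)) = of_nat (s+k+1) * of_nat ((s+k) choose k)"
      using c2 by (metis of_nat_mult)
    ultimately show ?thesis using Suc unfolding e2
      by (simp add: one_minus_X_nth W_def algebra_simps)
  qed
qed

lemma W_inv: "(1 - XX) ^ (s+1) * W s = 1"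
proof (induction s)
  case 0
  show ?case
    by (rule fps_ext) (simp add: one_minus_X_nth W_def)
next
  case (Suc s)
  have "(1 - XX) * W (Suc s) = W s"
  proof (rule fps_ext)
    fix n
    show "fps_nth ((1 - XX) * W (Suc s)) n = fps_nth (W s) n"
      by (cases n) (simp_all add: one_minus_X_nth W_def)
  qed
  moreover have "(1 - XX) ^ (Suc s + 1) * W (Suc s) = (1 - XX) ^ (s+1) * ((1 - XX) * W (Suc s))"
    by (simp only: power_Suc2 mult.assoc add_Suc)
  ultimately have "(1 - XX) ^ (Suc s + 1) * W (Suc s) = (1 - XX) ^ (s+1) * W s"
    by simp
  then show ?case using Suc.IH by (simp only:)
qed

lemma P_deriv: "XX * (1 - XX) * fps_deriv (XX ^ m * (1 - XX) ^ n) =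
   (of_nat m * (1 - XX) - of_nat n * XX) * (XX ^ m * (1 - XX) ^ n)"
proof -
  have a: "XX * fps_deriv (XX ^ m) = of_nat m * XX ^ m"
  proof (cases m)
    case (Suc k)
    have "fps_deriv (XX ^ Suc k) = of_nat (Suc k) * 1 * XX ^ k"
      using fps_deriv_power'[of XX "Suc k"] by simp
    then show ?thesis using Suc by (simp add: algebra_simps)
  qed simp
  have b: "(1 - XX) * fps_deriv ((1 - XX) ^ n) = - of_nat n * (1 - XX) ^ n"
  proof (cases n)
    case (Suc k)
    have e: "fps_deriv ((1 - XX) ^ Suc k) = of_nat (Suc k) * (- 1) * (1 - XX) ^ k"
      using fps_deriv_power'[of "1 - XX" "Suc k"] by simp
    show ?thesis unfolding Suc e by (simp add: algebra_simps)
  qed simp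
  have "XX * (1 - XX) * fps_deriv (XX ^ m * (1 - XX) ^ n) =
      (1 - XX) * (1 - XX) ^ n * (XX * fps_deriv (XX ^ m)) + XX * XX ^ m * ((1 - XX) * fps_deriv ((1 - XX) ^ n))"
    by (simp add: algebra_simps)
  also have "\<dots> = (of_nat m * (1 - XX) - of_nat n * XX) * (XX ^ m * (1 - XX) ^ n)"
    unfolding a b by (simp add: algebra_simps)
  finally show ?thesis .
qed

lemma P_eigen:
  assumes "m \<le> 2*s+1"
  shows "Lop s (P s m * W s) = of_nat m * (P s m * W s)"
proof -
  let ?n = "2*s+1-m"
  have mn: "(of_nat m :: rat fps) + of_nat ?n = of_nat s + of_nat s + 1"
    using assms by (metis add.commute add.left_commute of_nat_1 of_nat_add le_add_diff_inverse mult_2)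
  have d: "fps_deriv (P s m * W s) = fps_deriv (P s m) * W s + P s m * fps_deriv (W s)" by simp
  have "Lop s (P s m * W s) = fps_const (of_nat s) * XX * (P s m * W s) +
     (XX * (1 - XX) * fps_deriv (P s m)) * W s + XX * P s m * ((1 - XX) * fps_deriv (W s))"
    unfolding Lop_def d by (simp add: algebra_simps)
  also have "\<dots> = (of_nat s * XX + (of_nat m * (1 - XX) - of_nat ?n * XX) + of_nat (s+1) * XX) * (P s m * W s)"
    unfolding W_deriv P_def P_deriv by (simp add: algebra_simps fps_of_nat)
  also have "of_nat s * XX + (of_nat m * (1 - XX) - of_nat ?n * XX) + of_nat (s+1) * XX = (of_nat m :: rat fps)"
  proof -
    have "of_nat s * XX + (of_nat m * (1 - XX) - of_nat ?n * XX) + of_nat (s+1) * XX =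
       of_nat m + (of_nat s + of_nat s + 1 - (of_nat m + of_nat ?n)) * (XX :: rat fps)"
      by (simp add: algebra_simps)
    then show ?thesis unfolding mn by simp
  qed
  finally show ?thesis .
qed

lemma Lop_add: "Lop s (f + g) = Lop s f + Lop s g"
  unfolding Lop_def by (simp add: algebra_simps)

lemma Lop_cmult: "Lop s (fps_const c * f) = fps_const c * Lop s f"
  unfolding Lop_def by (simp add: algebra_simps)

lemma Lop_zero: "Lop s 0 = 0"
  unfolding Lop_def by simp

lemma Lop_sum: "Lop s (sum g A) = sum (\<lambda>x. Lop s (g x)) A"
  by (induction A rule: infinite_finite_induct) (simp_all add: Lop_zero Lop_add)

lemma Phi_alt: "Phi s a = (\<Sum>m\<le>2*s+1. fps_const (a m) * (P s m * W s))"
  unfolding Phi_def by (simp only: sum_distrib_right mult.assoc)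

lemma Lop_Phi: "Lop s (Phi s a) = Phi s (\<lambda>m. of_nat m * a m)"
proof -
  have "Lop s (Phi s a) = (\<Sum>m\<le>2*s+1. fps_const (a m) * Lop s (P s m * W s))"
    unfolding Phi_alt Lop_sum Lop_cmult ..
  also have "\<dots> = (\<Sum>m\<le>2*s+1. fps_const (of_nat m * a m) * (P s m * W s))"
  proof (rule sum.cong[OF refl])
    fix x assume "x \<in> {..2*s+1}"
    then have "x \<le> 2*s+1" by simp
    have e: "(of_nat x :: rat fps) = fps_const (of_nat x)" by (rule fps_of_nat[symmetric])
    from P_eigen[OF \<open>x \<le> 2*s+1\<close>]
    have "Lop s (P s x * W s) = fps_const (of_nat x) * (P s x * W s)"
      by (simp only: e)
    then show "fps_const (a x) * Lop s (P s x * W s) = fps_const (of_nat x * a x) * (P s x * W s)"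
      by (simp only: mult.assoc[symmetric] fps_const_mult mult.commute[of "a x" "of_nat x"])
  qed
  finally show ?thesis unfolding Phi_alt .
qed

lemma Phi_diff: "Phi s a - Phi s b = Phi s (\<lambda>m. a m - b m)"
  unfolding Phi_def by (simp only: left_diff_distrib[symmetric] sum_subtractf[symmetric] fps_const_sub)

lemma Phi_scale: "fps_const c * Phi s a = Phi s (\<lambda>m. c * a m)"
  unfolding Phi_def by (simp only: sum_distrib_left mult.assoc[symmetric] fps_const_mult)

definition lam :: "nat \<Rightarrow> nat \<Rightarrow> rat" where
  "lam i m = (if m = 0 then 1 else (-1) ^ i * of_nat ((m - 1) choose i))"

lemma lam_Suc: "lam (Suc i) m = lam i m * (of_nat (Suc i) - of_nat m) / of_nat (Suc i)"
proof (cases m)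
  case 0 then show ?thesis by (simp add: lam_def)
next
  case (Suc k)
  have c: "rat_of_nat (Suc i) * of_nat (k choose Suc i) = (of_nat k - of_nat i) * of_nat (k choose i)"
  proof (cases "i \<le> k")
    case True
    have "Suc i * (k choose Suc i) = (k - i) * (k choose i)"
      using binomial_absorption[of i k] binomial_absorb_comp[of k i] by simp
    then show ?thesis using True by (metis of_nat_diff of_nat_mult)
  next
    case False
    then show ?thesis by (simp add: binomial_eq_0)
  qed
  have "lam (Suc i) m * of_nat (Suc i) = - ((-1) ^ i * (rat_of_nat (Suc i) * of_nat (k choose Suc i)))"
    using Suc by (simp add: lam_def)
  also have "\<dots> = lam i m * (of_nat (Suc i) - of_nat m)"
    unfolding c using Suc by (simp add: lam_def algebra_simps)
  finally show ?thesis by (simp add: field_simps del: of_nat_Suc)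
qed

lemma binom_one: "(\<Sum>k\<le>n. of_nat (n choose k) * XX ^ k * (1 - XX) ^ (n - k)) = 1"
  using binomial_ring[of XX "1 - XX" n] by simp

lemma S1: "(\<Sum>m\<le>2*s+1. fps_const (of_nat (2*s choose m)) * P s m) = 1 - XX"
proof -
  have "(\<Sum>m\<le>2*s+1. fps_const (of_nat (2*s choose m)) * P s m) =
        (\<Sum>m\<le>2*s. fps_const (of_nat (2*s choose m)) * P s m)"
    by (simp add: binomial_eq_0)
  also have "\<dots> = (\<Sum>m\<le>2*s. of_nat (2*s choose m) * XX ^ m * (1 - XX) ^ (2*s - m)) * (1 - XX)"
    unfolding sum_distrib_right
  proof (rule sum.cong[OF refl])
    fix m assume "m \<in> {..2*s}"
    then have "2*s+1-m = Suc (2*s - m)" by auto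
    then show "fps_const (of_nat (2*s choose m)) * P s m =
      of_nat (2*s choose m) * XX ^ m * (1 - XX) ^ (2*s - m) * (1 - XX)"
      unfolding P_def fps_of_nat by (simp add: algebra_simps)
  qed
  finally show ?thesis unfolding binom_one by simp
qed

lemma S2: "(\<Sum>m\<le>2*s+1. fps_const (if m = 0 then 0 else of_nat (2*s choose (m - 1))) * P s m) = XX"
proof -
  have "(\<Sum>m\<le>2*s+1. fps_const (if m = 0 then 0 else of_nat (2*s choose (m - 1))) * P s m) =
        (\<Sum>k\<le>2*s. fps_const (of_nat (2*s choose k)) * P s (Suc k))"
    unfolding Suc_eq_plus1[symmetric] sum.atMost_Suc_shift by simp
  also have "\<dots> = (\<Sum>m\<le>2*s. of_nat (2*s choose m) * XX ^ m * (1 - XX) ^ (2*s - m)) * XX"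
    unfolding sum_distrib_right
  proof (rule sum.cong[OF refl])
    fix m assume "m \<in> {..2*s}"
    then have "2*s+1-Suc m = 2*s - m" by auto
    then show "fps_const (of_nat (2*s choose m)) * P s (Suc m) =
      of_nat (2*s choose m) * XX ^ m * (1 - XX) ^ (2*s - m) * XX"
      unfolding P_def fps_of_nat by (simp add: algebra_simps)
  qed
  finally show ?thesis unfolding binom_one by simp
qed

lemma S3: "(\<Sum>m\<le>2*s+1. fps_const (of_nat (s choose m)) * P s m) = (1 - XX) ^ (s+1)"
proof -
  have "(\<Sum>m\<le>2*s+1. fps_const (of_nat (s choose m)) * P s m) =
        (\<Sum>m\<le>s. of_nat (s choose m) * XX ^ m * (1 - XX) ^ (s - m) * (1 - XX) ^ (s+1))"
  proof (rule sum.mono_neutral_cong_right)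
    show "\<forall>i\<in>{..2*s+1} - {..s}. fps_const (of_nat (s choose i)) * P s i = 0"
      by (simp add: binomial_eq_0)
    fix m assume "m \<in> {..s}"
    then have eq: "2*s+1-m = (s - m) + (s+1)" by auto
    show "fps_const (of_nat (s choose m)) * P s m =
      of_nat (s choose m) * XX ^ m * (1 - XX) ^ (s - m) * (1 - XX) ^ (s+1)"
      unfolding P_def eq by (simp only: fps_of_nat power_add mult_ac)
  qed auto
  also have "\<dots> = (\<Sum>m\<le>s. of_nat (s choose m) * XX ^ m * (1 - XX) ^ (s - m)) * (1 - XX) ^ (s+1)"
    by (simp only: sum_distrib_right)
  finally show ?thesis unfolding binom_one by simp
qed

definition c0 :: "nat \<Rightarrow> nat \<Rightarrow> rat" where
  "c0 s m = of_nat (2*s choose m) - (if m = 0 then 0 else of_nat (2*s choose (m - 1))) - of_nat (s choose m)"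

lemma Phi_c0: "Phi s (c0 s) = (1 - 2 * XX) * W s - 1"
proof -
  have "(\<Sum>m\<le>2*s+1. fps_const (c0 s m) * P s m) =
     (\<Sum>m\<le>2*s+1. fps_const (of_nat (2*s choose m)) * P s m)
     - (\<Sum>m\<le>2*s+1. fps_const (if m = 0 then 0 else of_nat (2*s choose (m - 1))) * P s m)
     - (\<Sum>m\<le>2*s+1. fps_const (of_nat (s choose m)) * P s m)"
    unfolding c0_def fps_const_sub[symmetric] left_diff_distrib sum_subtractf ..
  also have "\<dots> = 1 - 2 * XX - (1 - XX) ^ (s+1)" unfolding S1 S2 S3 by simp
  finally have "Phi s (c0 s) = (1 - 2 * XX - (1 - XX) ^ (s+1)) * W s"
    unfolding Phi_def by (simp only:)
  also have "\<dots> = (1 - 2 * XX) * W s - (1 - XX) ^ (s+1) * W s"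
    by (simp only: left_diff_distrib)
  finally show ?thesis unfolding W_inv .
qed

lemma H0: assumes "s > 0" shows "H s 0 = (1 - 2 * XX) * W s - 1"
proof (rule fps_ext)
  fix n
  have e: "(1 - 2 * XX) * W s - 1 = W s - fps_const 2 * (XX * W s) - 1"
    by (simp add: algebra_simps numeral_fps_const)
  show "fps_nth (H s 0) n = fps_nth ((1 - 2 * XX) * W s - 1) n"
  proof (cases n)
    case 0 then show ?thesis unfolding e by (simp add: H_def W_def)
  next
    case (Suc k)
    have nat1: "s * ((s+k) choose k) = Suc k * ((s+k) choose Suc k)"
      using binomial_absorption[of k "s+k"] binomial_absorb_comp[of "s+k" k] by simp
    then have r1: "rat_of_nat s * of_nat ((s+k) choose k) = of_nat (Suc k) * of_nat ((s+k) choose Suc k)"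
      by (metis of_nat_mult)
    have ee: "s + nat (int n) - 1 = s + k" "nat (int n) = Suc k" "\<not> int n \<le> 0" using Suc by auto
    have "h s 0 (int n) = (if int n \<le> 0 then 0 else of_nat ((s + nat (int n) - 1) choose (nat (int n))) * of_int (int s - int n) / of_nat s)"
      by (rule h.simps(1))
    also have "\<dots> = of_nat ((s+k) choose Suc k) * of_int (int s - int (Suc k)) / of_nat s"
      unfolding ee using Suc by simp
    also have "\<dots> = of_nat ((s + Suc k) choose Suc k) - 2 * of_nat ((s+k) choose k)"
      using assms r1 by (simp add: field_simps)
    finally show ?thesis unfolding e using Suc by (simp add: H_def W_def)
  qed
qed

lemma H_Phi: assumes "s > 0" shows "H s i = Phi s (\<lambda>m. lam i m * c0 s m)"
proof (induction i)
  case 0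
  have "(\<lambda>m. lam 0 m * c0 s m) = c0 s" by (simp add: lam_def fun_eq_iff)
  then show ?case using H0[OF assms] Phi_c0 by simp
next
  case (Suc i)
  have e: "(of_nat (Suc i) :: rat fps) = fps_const (of_nat (Suc i))" by (rule fps_of_nat[symmetric])
  have "fps_const (of_nat (Suc i)) * H s (Suc i) =
     fps_const (of_nat (Suc i)) * H s i - Lop s (H s i)"
    using H_rec[of i s] unfolding e .
  also have "\<dots> = Phi s (\<lambda>m. of_nat (Suc i) * (lam i m * c0 s m) - of_nat m * (lam i m * c0 s m))"
    unfolding Suc Phi_scale Lop_Phi Phi_diff ..
  also have "\<dots> = Phi s (\<lambda>m. of_nat (Suc i) * (lam (Suc i) m * c0 s m))"
    by (rule arg_cong[where f="Phi s"]) (simp add: lam_Suc fun_eq_iff field_simps del: of_nat_Suc)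
  also have "\<dots> = fps_const (of_nat (Suc i)) * Phi s (\<lambda>m. lam (Suc i) m * c0 s m)"
    unfolding Phi_scale ..
  finally show ?case by simp
qed

definition IF :: "rat fps \<Rightarrow> bool" where "IF f = (\<forall>n. fps_nth f n \<in> \<int>)"

lemma IF_mult: "IF f \<Longrightarrow> IF g \<Longrightarrow> IF (f * g)"
  unfolding IF_def fps_mult_nth by (auto intro!: Ints_sum Ints_mult)

lemma IF_one: "IF 1" unfolding IF_def by simp
lemma IF_X: "IF XX" unfolding IF_def by simp
lemma IF_diff: "IF f \<Longrightarrow> IF g \<Longrightarrow> IF (f - g)" unfolding IF_def by (auto intro!: Ints_diff)
lemma IF_power: "IF f \<Longrightarrow> IF (f ^ n)"
  by (induction n) (simp_all add: IF_one IF_mult)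
lemma IF_W: "IF (W s)" unfolding IF_def W_def by simp

lemma IF_PW: "IF (P s m * W s)"
  unfolding P_def by (intro IF_mult IF_power IF_diff IF_one IF_X IF_W)

lemma lam_Ints: "lam i m \<in> \<int>" unfolding lam_def by auto
lemma c0_Ints: "c0 s m \<in> \<int>" unfolding c0_def by auto

theorem corollary7:
  fixes s i :: nat and j :: int
  assumes "s > 0"
  shows "h s i j \<in> \<int>"
proof (cases "j < 0")
  case True
  then show ?thesis using h_zero[of j i s] by simp
next
  case False
  then obtain n where n: "j = int n" by (metis nonneg_int_cases not_less)
  have "h s i j = fps_nth (H s i) n" unfolding H_def n by simp
  also have "\<dots> = (\<Sum>m\<le>2*s+1. lam i m * c0 s m * fps_nth (P s m * W s) n)"
    unfolding H_Phi[OF assms] Phi_alt fps_sum_nth by simp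
  also have "\<dots> \<in> \<int>"
    using IF_PW lam_Ints c0_Ints unfolding IF_def by (intro Ints_sum Ints_mult) auto
  finally show ?thesis .
qed

end
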